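(* Let $\Omega=D(0,1)\cup D(1,1)$ and let $\alpha(z)$ be a function such that: $\alpha$ is of finite Mittag-Leffler type in $\Omega$; $\alpha$ is holomorphic in $D(0,1)$; and $\alpha$ has at $z=1$ a pole of order $\nu\ge0$. Then there exists an integer $m\ge1$ such that $(z-1)^\nu\alpha(z)$ has a multi-power series expansion around $1$ that converges absolutely and uniformly on $$\Omega_m=\{z\in\mathbb C:\ |z|<2^{1/m},\ |\operatorname{Arg}(z)|<\tfrac{\pi}{2m}\}.$$ In particular, the Taylor expansion of $\alpha$ around $0$ is a tame power series.
   Context: $D(a,r)$ denotes the open disk of center $a$ and radius $r$. A function $\alpha$ is of finite Mittag-Leffler type in an open set $U$ if there is a finite set $S\subset U$ such that $\alpha$ is holomorphic on $U\setminus S$ and for each $q\in S$ there is an entire function $\alpha_q$ such that $\alpha(z)-\alpha_q\big(1/(z-q)\big)$ has a removable singularity at $q$. (Here $z=1$ may belong to $S$; a pole of order $0$ means holomorphic at $1$.) For $N\ge1$ and $\mathbf e=(e_1,\dots,e_N)\in\mathbb Z_{>0}^N$ let $\lambda_{\mathbf e}(z)=(z^{e_1},\dots,z^{e_N})$. A multi-power series around $1$ is a series $\sum_{\mathbf i\in\mathbb Z_{\ge0}^N}c_{\mathbf i}(\lambda_{\mathbf e}(z)-\mathbf 1)^{\mathbf i}$, where $\mathbf 1=(1,\dots,1)$ and $\mathbf w^{\mathbf i}=\prod_j w_j^{i_j}$; convergence is meant in the usual sense for such multi-indexed series. A power series $\alpha(z)=\sum_{n\ge0}a_{n+1}z^n$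 is tame if (1) it converges on $D(0,1)$; (2) the function it represents extends holomorphically to a punctured neighborhood of $z=1$ with a pole of order $\nu\ge0$ at $z=1$; (3) on some open neighborhood of the interval $(0,1]$, $(z-1)^\nu\alpha(z)$ equals a multi-power series around $1$ converging absolutely and uniformly there. *)

theory Defs
  imports "HOL-Complex_Analysis.Complex_Analysis"
begin

definition finite_ML_type :: "(complex \<Rightarrow> complex) \<Rightarrow> complex set \<Rightarrow> bool" where
  "finite_ML_type \<alpha> U \<longleftrightarrow>
     (\<exists>S. finite S \<and> S \<subseteq> U \<and> \<alpha> holomorphic_on (U - S) \<and>
        (\<forall>q\<in>S. \<exists>\<alpha>q. \<alpha>q holomorphic_on UNIV \<and>
            (\<exists>l. ((\<lambda>z. \<alpha> z - \<alpha>q (1 / (z - q))) \<longlongrightarrow> l) (at q))))"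

definition pole_of_order :: "(complex \<Rightarrow> complex) \<Rightarrow> complex \<Rightarrow> nat \<Rightarrow> bool" where
  "pole_of_order f p \<nu> \<longleftrightarrow>
     (if \<nu> = 0 then (\<exists>r>0. f holomorphic_on ball p r)
      else (\<exists>r>0. \<exists>g. g holomorphic_on ball p r \<and> g p \<noteq> 0 \<and>
                 (\<forall>z\<in>ball p r - {p}. f z = g z / (z - p) ^ \<nu>)))"

(* multi-indices in Z_{>=0}^N, as functions vanishing from N on *)
definition multi_idx :: "nat \<Rightarrow> (nat \<Rightarrow> nat) set" where
  "multi_idx N = {i. \<forall>j\<ge>N. i j = 0}"

(* the term c_i (lambda_e(z) - 1)^i *)
definition mps_term :: "nat \<Rightarrow> (nat \<Rightarrow> nat) \<Rightarrow> ((nat \<Rightarrow> nat) \<Rightarrow> complex) \<Rightarrow> complex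
                        \<Rightarrow> (nat \<Rightarrow> nat) \<Rightarrow> complex" where
  "mps_term N e c z i = c i * (\<Prod>j<N. (z ^ e j - 1) ^ i j)"

definition multi_power_series_at_1 :: "complex set \<Rightarrow> (complex \<Rightarrow> complex) \<Rightarrow> bool" where
  "multi_power_series_at_1 U f \<longleftrightarrow>
     (\<exists>N e c. N \<ge> 1 \<and> (\<forall>j<N. e j > 0) \<and>
        (\<forall>z\<in>U. (\<lambda>i. norm (mps_term N e c z i)) summable_on multi_idx N \<and>
                 (mps_term N e c z has_sum f z) (multi_idx N)) \<and>
        uniform_limit U (\<lambda>F z. \<Sum>i\<in>F. mps_term N e c z i) f
            (finite_subsets_at_top (multi_idx N)) \<and>
        uniform_limit U (\<lambda>F z. \<Sum>i\<in>F. norm (mps_term N e c z i))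
            (\<lambda>z. infsum (\<lambda>i. norm (mps_term N e c z i)) (multi_idx N))
            (finite_subsets_at_top (multi_idx N)))"

(* tame power series; b n is the coefficient of z^n (i.e. b n = a_(n+1)) *)
definition tame :: "(nat \<Rightarrow> complex) \<Rightarrow> bool" where
  "tame b \<longleftrightarrow>
     (\<forall>z\<in>ball 0 1. summable (\<lambda>n. b n * z ^ n)) \<and>
     (\<exists>h r \<nu>. r > 0 \<and>
        (\<forall>z\<in>ball 0 1. h z = (\<Sum>n. b n * z ^ n)) \<and>
        h holomorphic_on (ball 1 r - {1}) \<and>
        pole_of_order h 1 \<nu> \<and>
        (\<exists>U f. open U \<and> U \<subseteq> ball 0 1 \<union> ball 1 r \<and>
               of_real ` {0<..1} \<subseteq> U \<and>
               multi_power_series_at_1 U f \<and>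
               (\<forall>z\<in>U - {1}. f z = (z - 1) ^ \<nu> * h z)))"

definition Omega_m :: "nat \<Rightarrow> complex set" where
  "Omega_m m = {z. z \<noteq> 0 \<and> norm z < 2 powr (1 / real m) \<and> \<bar>Arg z\<bar> < pi / (2 * real m)}"

end

theory Submission
  imports Defs
begin
lemma pow_as_binom:
  assumes "k < e"
  shows "(z::complex)^k = (\<Sum>i<e. of_nat (k choose i) * (z-1)^i)"
proof -
  have "z^k = ((z-1) + 1)^k" by simp
  also have "\<dots> = (\<Sum>i\<le>k. of_nat (k choose i) * (z-1)^i)"
    by (subst binomial_ring) simp
  also have "\<dots> = (\<Sum>i<e. of_nat (k choose i) * (z-1)^i)"
    by (rule sum.mono_neutral_left) (use assms in auto)
  finally show ?thesis .
qed

lemma kernel_split: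
  fixes t z :: complex
  assumes "t^e \<noteq> z^e"
  shows "1 / (t - z) = (\<Sum>k<e. z^k * t^(e-1-k)) / (t^e - z^e)"
proof -
  have eq: "t^e - z^e = (t - z) * (\<Sum>i<e. z^(e - Suc i) * t^i)"
    by (rule power_diff_sumr2)
  have "(\<Sum>i<e. z^(e - Suc i) * t^i) = (\<Sum>k<e. z^k * t^(e-1-k))"
    by (rule sum.reindex_bij_witness[where i="\<lambda>k. e - 1 - k" and j="\<lambda>i. e - 1 - i"]) auto
  with eq assms have "t - z \<noteq> 0" and "t^e - z^e = (t - z) * (\<Sum>k<e. z^k * t^(e-1-k))" by auto
  thus ?thesis using assms by (simp add: field_simps)
qed

lemma uniform_has_sum_Mtest:
  fixes t :: "'a \<Rightarrow> 'b \<Rightarrow> 'c::banach"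
  assumes hs: "\<And>z. z \<in> V \<Longrightarrow> (t z has_sum f z) I"
    and bd: "\<And>z i. z \<in> V \<Longrightarrow> i \<in> I \<Longrightarrow> norm (t z i) \<le> M i"
    and sM: "M summable_on I"
  shows "uniform_limit V (\<lambda>F z. \<Sum>i\<in>F. t z i) f (finite_subsets_at_top I)"
  unfolding uniform_limit_iff
proof (intro allI impI)
  fix e :: real assume e: "e > 0"
  obtain SM where SM: "(M has_sum SM) I" using sM summable_on_def by blast
  hence "(sum M \<longlongrightarrow> SM) (finite_subsets_at_top I)" by (simp add: has_sum_def)
  hence ev: "\<forall>\<^sub>F F in finite_subsets_at_top I. dist (sum M F) SM < e"
    using e tendsto_iff by blast
  have ev2: "\<forall>\<^sub>F F in finite_subsets_at_top I. finite F \<and> F \<subseteq> I"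
    by (rule eventually_finite_subsets_at_top_weakI) simp
  show "\<forall>\<^sub>F F in finite_subsets_at_top I. \<forall>z\<in>V. dist (\<Sum>i\<in>F. t z i) (f z) < e"
  proof (rule eventually_mono[OF eventually_conj[OF ev ev2]])
    fix F assume F: "dist (sum M F) SM < e \<and> finite F \<and> F \<subseteq> I"
    show "\<forall>z\<in>V. dist (\<Sum>i\<in>F. t z i) (f z) < e"
    proof
      fix z assume z: "z \<in> V"
      have h1: "(t z has_sum (f z - sum (t z) F)) (I - F)"
        using has_sum_Diff[OF hs[OF z] has_sum_finite[of F "t z"]] F by auto
      have h2: "(M has_sum (SM - sum M F)) (I - F)"
        using has_sum_Diff[OF SM has_sum_finite[of F M]] F by auto
      have "norm (f z - sum (t z) F) \<le> SM - sum M F"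
        using norm_infsum_le[OF h1 h2] bd z by auto
      also have "\<dots> < e" using F by (auto simp: dist_real_def abs_less_iff)
      finally show "dist (\<Sum>i\<in>F. t z i) (f z) < e"
        by (simp add: dist_norm norm_minus_commute)
    qed
  qed
qed

lemma arc_expansion:
  fixes G :: "complex \<Rightarrow> complex" and c :: complex
  assumes contG: "continuous_on (path_image (part_circlepath c r a b)) G"
    and r: "r > 0" and ab: "a < b" and e: "e > 0" and \<sigma>: "\<sigma> \<ge> 0" and \<rho>\<sigma>: "\<rho>' > \<sigma>"
    and far: "\<And>t. t \<in> path_image (part_circlepath c r a b) \<Longrightarrow> \<rho>' \<le> norm (t^e - 1)"
  obtains coef K where "K \<ge> 0"
    "\<And>z. norm (z-1) \<le> 1 \<Longrightarrow> norm (z^e - 1) \<le> \<sigma> \<Longrightarrow>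
       ((\<lambda>(i,n). coef i n * (z-1)^i * (z^e-1)^n) has_sum
          contour_integral (part_circlepath c r a b) (\<lambda>t. G t / (t - z))) ({..<e} \<times> UNIV)"
    "\<And>z i n. norm (z-1) \<le> 1 \<Longrightarrow> norm (z^e - 1) \<le> \<sigma> \<Longrightarrow>
       norm (coef i n * (z-1)^i * (z^e-1)^n) \<le> K * (\<sigma>/\<rho>')^n"
proof -
  define \<gamma> where "\<gamma> = part_circlepath c r a b"
  define PI where "PI = path_image \<gamma>"
  have \<rho>pos: "\<rho>' > 0" using \<sigma> \<rho>\<sigma> by linarith
  have cpt: "compact PI" unfolding PI_def \<gamma>_def by (intro compact_path_image) simp
  have Ane: "\<And>t. t \<in> PI \<Longrightarrow> t^e - 1 \<noteq> 0" using far \<rho>pos unfolding PI_def \<gamma>_def by force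
  have contG': "continuous_on PI G" using contG unfolding PI_def \<gamma>_def .
  obtain MG where MG: "\<And>t. t \<in> PI \<Longrightarrow> norm (G t) \<le> MG"
    using compact_imp_bounded[OF compact_continuous_image[OF contG' cpt]] unfolding bounded_iff by auto
  obtain R0 where R0: "\<And>t. t \<in> PI \<Longrightarrow> norm t \<le> R0"
    using compact_imp_bounded[OF cpt] unfolding bounded_iff by auto
  define R where "R = max R0 1"
  have R1: "R \<ge> 1" and R: "\<And>t. t \<in> PI \<Longrightarrow> norm t \<le> R" using R0 unfolding R_def by force+
  define B where "B = max MG 0 * R^e"
  have B0: "B \<ge> 0" unfolding B_def using R1 by simp
  have Bbd: "norm (G t * t^(e-1-k)) \<le> B" if t: "t \<in> PI" for t k
  proof -
    have "norm (G t * t^(e-1-k)) = norm (G t) * norm t ^ (e-1-k)" by (simp add: norm_mult norm_power)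
    also have "\<dots> \<le> max MG 0 * R^(e-1-k)"
      by (intro mult_mono power_mono) (use MG[OF t] R[OF t] R1 in auto)
    also have "\<dots> \<le> max MG 0 * R^e"
      by (intro mult_left_mono power_increasing) (use R1 in auto)
    finally show ?thesis unfolding B_def .
  qed
  define \<psi> where "\<psi> k n t = G t * t^(e-1-k) / (t^e - 1)^(Suc n)" for k n t
  have cont\<psi>: "continuous_on PI (\<psi> k n)" for k n
    unfolding \<psi>_def by (intro continuous_intros contG') (use Ane in auto)
  have int\<psi>: "\<psi> k n contour_integrable_on \<gamma>" for k n
    using cont\<psi> unfolding PI_def \<gamma>_def by (intro contour_integrable_continuous_part_circlepath)
  define aa where "aa k n = contour_integral \<gamma> (\<psi> k n)" for k n
  have \<psi>bd: "norm (\<psi> k n t) \<le> B / \<rho>'^Suc n" if t: "t \<in> PI" for k n t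
  proof -
    have "norm (\<psi> k n t) = norm (G t * t^(e-1-k)) / norm (t^e - 1) ^ Suc n"
      unfolding \<psi>_def by (simp add: norm_divide norm_power norm_mult del: power_Suc)
    also have "\<dots> \<le> B / \<rho>'^Suc n"
      by (intro frac_le Bbd t power_mono) (use B0 \<rho>pos far t in \<open>auto simp: PI_def \<gamma>_def\<close>)
    finally show ?thesis .
  qed
  have aabd: "norm (aa k n) \<le> B / \<rho>'^Suc n * r * (b - a)" for k n
  proof -
    have "(\<psi> k n has_contour_integral aa k n) (part_circlepath c r a b)"
      using has_contour_integral_integral[OF int\<psi>] unfolding aa_def \<gamma>_def .
    thus ?thesis
      by (rule has_contour_integral_bound_part_circlepath) (use B0 \<rho>pos r ab \<psi>bd in \<open>auto simp: PI_def \<gamma>_def\<close>)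
  qed
  define coef where "coef i n = (\<Sum>k<e. of_nat (k choose i) * aa k n)" for i n
  define K where "K = (\<Sum>k<e. 2^k) * (B * r * (b - a) / \<rho>')"
  have K0: "K \<ge> 0" unfolding K_def using B0 r ab \<rho>pos by (intro mult_nonneg_nonneg sum_nonneg) auto
  have coefbd: "norm (coef i n) \<le> K / \<rho>'^n" for i n
  proof -
    have "norm (coef i n) \<le> (\<Sum>k<e. norm (of_nat (k choose i) * aa k n))"
      unfolding coef_def by (rule norm_sum)
    also have "\<dots> \<le> (\<Sum>k<e. 2^k * (B / \<rho>'^Suc n * r * (b - a)))"
    proof (rule sum_mono)
      fix k
      have "real (k choose i) \<le> 2^k" using binomial_le_pow2[of k i] by (metis of_nat_le_iff of_nat_numeral of_nat_power)
      thus "norm (of_nat (k choose i) * aa k n) \<le> 2^k * (B / \<rho>'^Suc n * r * (b - a))"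
        unfolding norm_mult by (intro mult_mono aabd) auto
    qed
    also have "\<dots> = K / \<rho>'^n" unfolding K_def sum_distrib_right sum_divide_distrib using \<rho>pos
      by (intro sum.cong refl) (simp add: field_simps)
    finally show ?thesis .
  qed
  have termbd: "norm (coef i n * (z-1)^i * (z^e-1)^n) \<le> K * (\<sigma>/\<rho>')^n"
    if hz: "norm (z-1) \<le> 1" "norm (z^e - 1) \<le> \<sigma>" for z i n
  proof -
    have "norm (coef i n * (z-1)^i * (z^e-1)^n) = norm (coef i n) * norm (z-1)^i * norm (z^e-1)^n"
      by (simp add: norm_mult norm_power)
    also have "\<dots> \<le> K / \<rho>'^n * 1 * \<sigma>^n"
      by (intro mult_mono coefbd power_le_one power_mono) (use hz K0 \<rho>pos in auto)
    also have "\<dots> = K * (\<sigma>/\<rho>')^n" by (simp add: power_divide)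
    finally show ?thesis .
  qed
  have main: "((\<lambda>(i,n). coef i n * (z-1)^i * (z^e-1)^n) has_sum contour_integral \<gamma> (\<lambda>t. G t / (t - z))) ({..<e} \<times> UNIV)"
    if hz: "norm (z-1) \<le> 1" "norm (z^e - 1) \<le> \<sigma>" for z
  proof -
    define v where "v = z^e - 1"
    have tz: "t^e \<noteq> z^e" if "t \<in> PI" for t
      using far[of t] that hz \<rho>\<sigma> unfolding PI_def \<gamma>_def by force
    have contI: "continuous_on PI (\<lambda>t. G t * t^(e-1-k) / (t^e - z^e))" for k
      by (intro continuous_intros contG') (use tz in auto)
    have claim1: "(\<lambda>n. aa k n * v^n) sums contour_integral \<gamma> (\<lambda>t. G t * t^(e-1-k) / (t^e - z^e))" for k
    proof -
      define f where "f n t = \<psi> k n t * v^n" for n t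
      define M where "M n = B / \<rho>' * (\<sigma>/\<rho>')^n" for n
      have fbd: "norm (f n t) \<le> M n" if "t \<in> PI" for n t
      proof -
        have "norm (f n t) = norm (\<psi> k n t) * norm v ^ n" unfolding f_def by (simp add: norm_mult norm_power)
        also have "\<dots> \<le> B / \<rho>'^Suc n * \<sigma>^n"
          by (intro mult_mono \<psi>bd that power_mono) (use hz B0 \<rho>pos in \<open>auto simp: v_def\<close>)
        also have "\<dots> = M n" unfolding M_def by (simp add: power_divide field_simps)
        finally show ?thesis .
      qed
      have sM: "summable M" unfolding M_def
        by (intro summable_mult complete_algebra_summable_geometric) (use \<sigma> \<rho>\<sigma> in auto)
      have fsum: "(\<lambda>n. f n t) sums (G t * t^(e-1-k) / (t^e - z^e))" if t: "t \<in> PI" for t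
      proof -
        define A where "A = t^e - 1"
        have A0: "A \<noteq> 0" using Ane t unfolding A_def by auto
        have lt: "norm (v / A) < 1"
          using far[of t] t hz \<rho>\<sigma> A0 unfolding A_def v_def PI_def \<gamma>_def
          by (auto simp: norm_divide divide_less_eq)
        have s1: "(\<lambda>n. (G t * t^(e-1-k) / A) * (v/A)^n) sums ((G t * t^(e-1-k) / A) * (1 / (1 - v/A)))"
          by (intro sums_mult geometric_sums lt)
        have s2: "(G t * t^(e-1-k) / A) * (1 / (1 - v/A)) = G t * t^(e-1-k) / (t^e - z^e)"
        proof -
          have d: "1 - v/A = (t^e - z^e)/A" using A0 unfolding A_def v_def by (simp add: field_simps)
          have "t^e - z^e \<noteq> 0" using tz[OF t] by simp
          thus ?thesis unfolding d using A0 by simp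
        qed
        have s3: "(\<lambda>n. f n t) = (\<lambda>n. (G t * t^(e-1-k) / A) * (v/A)^n)"
          unfolding f_def \<psi>_def A_def by (rule ext) (simp add: field_simps power_divide)
        show ?thesis using s1 unfolding s2 s3 .
      qed
      have ul: "uniform_limit PI (\<lambda>N t. \<Sum>n<N. f n t) (\<lambda>t. G t * t^(e-1-k) / (t^e - z^e)) sequentially"
      proof -
        have "uniform_limit PI (\<lambda>N t. \<Sum>n<N. f n t) (\<lambda>t. suminf (\<lambda>n. f n t)) sequentially"
          by (rule Weierstrass_m_test[OF fbd sM])
        moreover have "suminf (\<lambda>n. f n t) = G t * t^(e-1-k) / (t^e - z^e)" if "t \<in> PI" for t
          using fsum[OF that] by (simp add: sums_iff)
        ultimately show ?thesis using uniform_limit_cong' by (metis (no_types, lifting))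
      qed
      have intf: "(\<lambda>t. \<Sum>n<N. f n t) contour_integrable_on \<gamma>" for N
        unfolding f_def by (intro contour_integrable_sum contour_integrable_rmul int\<psi>) auto
      have "((\<lambda>N. contour_integral \<gamma> (\<lambda>t. \<Sum>n<N. f n t)) \<longlongrightarrow> contour_integral \<gamma> (\<lambda>t. G t * t^(e-1-k) / (t^e - z^e))) sequentially"
      proof (rule contour_integral_uniform_limit(2)[of _ _ _ _ "r * (b - a)"])
        show "\<forall>\<^sub>F N in sequentially. (\<lambda>t. \<Sum>n<N. f n t) contour_integrable_on \<gamma>" using intf by simp
        show "uniform_limit (path_image \<gamma>) (\<lambda>N t. \<Sum>n<N. f n t) (\<lambda>t. G t * t^(e-1-k) / (t^e - z^e)) sequentially"
          using ul unfolding PI_def .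
        show "norm (vector_derivative \<gamma> (at x)) \<le> r * (b - a)" for x
        proof -
          have "cmod (complex_of_real b - complex_of_real a) = b - a"
            using ab by (metis abs_of_pos diff_gt_0_iff_gt norm_of_real of_real_diff)
          thus ?thesis unfolding \<gamma>_def vector_derivative_part_circlepath using r ab
            by (simp add: norm_mult)
        qed
      qed (auto simp: \<gamma>_def)
      moreover have "contour_integral \<gamma> (\<lambda>t. \<Sum>n<N. f n t) = (\<Sum>n<N. aa k n * v^n)" for N
        unfolding f_def aa_def
        by (subst contour_integral_sum) (auto intro!: contour_integrable_rmul int\<psi> sum.cong contour_integral_rmul)
      ultimately show ?thesis unfolding sums_def by simp
    qed
    have claim2: "contour_integral \<gamma> (\<lambda>t. G t / (t - z)) =
        (\<Sum>k<e. z^k * contour_integral \<gamma> (\<lambda>t. G t * t^(e-1-k) / (t^e - z^e)))"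
    proof -
      have "contour_integral \<gamma> (\<lambda>t. G t / (t - z)) =
            contour_integral \<gamma> (\<lambda>t. \<Sum>k<e. z^k * (G t * t^(e-1-k) / (t^e - z^e)))"
      proof (rule contour_integral_eq)
        fix t assume t: "t \<in> path_image \<gamma>"
        have "G t / (t - z) = G t * (1 / (t - z))" by simp
        also have "\<dots> = G t * ((\<Sum>k<e. z^k * t^(e-1-k)) / (t^e - z^e))"
          using kernel_split[OF tz[of t]] t unfolding PI_def by simp
        also have "\<dots> = (\<Sum>k<e. z^k * (G t * t^(e-1-k) / (t^e - z^e)))"
          by (simp add: sum_distrib_left sum_divide_distrib algebra_simps)
        finally show "G t / (t - z) = (\<Sum>k<e. z^k * (G t * t^(e-1-k) / (t^e - z^e)))" .
      qed
      also have "\<dots> = (\<Sum>k<e. z^k * contour_integral \<gamma> (\<lambda>t. G t * t^(e-1-k) / (t^e - z^e)))"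
      proof -
        have ii: "(\<lambda>t. G t * t^(e-1-k) / (t^e - z^e)) contour_integrable_on \<gamma>" for k
          using contI unfolding PI_def \<gamma>_def by (intro contour_integrable_continuous_part_circlepath)
        define Ik where "Ik k = (\<lambda>t. G t * t^(e-1-k) / (t^e - z^e))" for k
        have ii': "Ik k contour_integrable_on \<gamma>" for k unfolding Ik_def by (rule ii)
        have "contour_integral \<gamma> (\<lambda>t. \<Sum>k<e. z^k * Ik k t) = (\<Sum>k<e. contour_integral \<gamma> (\<lambda>t. z^k * Ik k t))"
          by (rule contour_integral_sum) (auto intro: contour_integrable_lmul ii')
        also have "\<dots> = (\<Sum>k<e. z^k * contour_integral \<gamma> (Ik k))"
          by (intro sum.cong refl contour_integral_lmul ii')
        finally show ?thesis unfolding Ik_def .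
      qed
      finally show ?thesis .
    qed
    define T where "T i n = coef i n * (z-1)^i * v^n" for i n
    have claim3: "(\<lambda>n. \<Sum>i<e. T i n) sums contour_integral \<gamma> (\<lambda>t. G t / (t - z))"
    proof -
      have "(\<lambda>n. \<Sum>k<e. z^k * (aa k n * v^n)) sums (\<Sum>k<e. z^k * contour_integral \<gamma> (\<lambda>t. G t * t^(e-1-k) / (t^e - z^e)))"
        by (intro sums_sum sums_mult claim1)
      moreover have "(\<Sum>k<e. z^k * (aa k n * v^n)) = (\<Sum>i<e. T i n)" for n
      proof -
        have "(\<Sum>k<e. z^k * (aa k n * v^n)) = (\<Sum>k<e. \<Sum>i<e. of_nat (k choose i) * (z-1)^i * (aa k n * v^n))"
          by (intro sum.cong refl) (simp add: pow_as_binom[of _ e z] sum_distrib_right)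
        also have "\<dots> = (\<Sum>i<e. \<Sum>k<e. of_nat (k choose i) * (z-1)^i * (aa k n * v^n))"
          by (rule sum.swap)
        also have "\<dots> = (\<Sum>i<e. T i n)"
          unfolding T_def coef_def by (intro sum.cong refl) (simp add: sum_distrib_left sum_distrib_right mult_ac)
        finally show ?thesis .
      qed
      ultimately show ?thesis using claim2 by simp
    qed
    have Tsum: "summable (\<lambda>n. norm (T i n))" for i
    proof (rule summable_comparison_test'[of "\<lambda>n. K * (\<sigma>/\<rho>')^n"])
      show "summable (\<lambda>n. K * (\<sigma>/\<rho>')^n)"
        by (intro summable_mult complete_algebra_summable_geometric) (use \<sigma> \<rho>\<sigma> in auto)
      show "norm (norm (T i n)) \<le> K * (\<sigma>/\<rho>')^n" for n
        using termbd[OF hz, of i n] unfolding T_def v_def by simp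
    qed
    have Thas: "(T i has_sum suminf (T i)) UNIV" for i
      by (rule norm_summable_imp_has_sum[OF Tsum]) (use Tsum summable_norm_cancel in \<open>blast intro: summable_sums\<close>)
    have Thas2: "((\<lambda>(i,n). T i n) has_sum suminf (T i)) ({i} \<times> UNIV)" for i
    proof -
      have inj: "inj (Pair i)" by (auto simp: inj_on_def)
      have h: "((case_prod T \<circ> Pair i) has_sum suminf (T i)) UNIV" using Thas[of i] by (simp add: comp_def)
      hence "(case_prod T has_sum suminf (T i)) (Pair i ` UNIV)" using has_sum_reindex[OF inj] by blast
      moreover have "Pair i ` UNIV = {i} \<times> UNIV" by auto
      ultimately show ?thesis by metis
    qed
    have "((\<lambda>(i,n). T i n) has_sum (\<Sum>i<e. suminf (T i))) (\<Union>i\<in>{..<e}. {i} \<times> UNIV)"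
      by (rule sum_has_sum) (use Thas2 in auto)
    moreover have "(\<Union>i\<in>{..<e}. {i} \<times> (UNIV::nat set)) = {..<e} \<times> UNIV" by auto
    moreover have "(\<Sum>i<e. suminf (T i)) = contour_integral \<gamma> (\<lambda>t. G t / (t - z))"
    proof -
      have "(\<Sum>i<e. suminf (T i)) = suminf (\<lambda>n. \<Sum>i<e. T i n)"
        by (rule suminf_sum[symmetric]) (use Tsum summable_norm_cancel in blast)
      thus ?thesis using claim3 sums_unique by metis
    qed
    ultimately show ?thesis unfolding T_def v_def by simp
  qed
  show ?thesis
    by (rule that[of K coef]) (use K0 main termbd in \<open>auto simp: \<gamma>_def\<close>)
qed

lemma has_sum_sum_fun:
  fixes f :: "'i \<Rightarrow> 'a \<Rightarrow> 'b::topological_comm_monoid_add"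
  assumes "finite L" "\<And>l. l \<in> L \<Longrightarrow> (f l has_sum s l) A"
  shows "((\<lambda>x. \<Sum>l\<in>L. f l x) has_sum (\<Sum>l\<in>L. s l)) A"
  using assms
proof (induction L rule: finite_induct)
  case empty thus ?case by simp
next
  case (insert l L)
  have "((\<lambda>x. f l x + (\<Sum>l\<in>L. f l x)) has_sum (s l + (\<Sum>l\<in>L. s l))) A"
    by (intro has_sum_add) (use insert in auto)
  thus ?case using insert by simp
qed

lemma has_sum_piece:
  assumes "inj_on F D" "F ` D \<subseteq> I" "\<And>x. x \<in> I - F ` D \<Longrightarrow> g x = 0" "((g \<circ> F) has_sum s) D"
  shows "(g has_sum s) I"
proof -
  have "(g has_sum s) (F ` D)" using has_sum_reindex[OF assms(1)] assms(4) by blast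
  thus ?thesis using has_sum_cong_neutral[of "F ` D" I g g s] assms(2,3) by auto
qed

lemma pcp_combine:
  assumes "a < b" "b < d"
    "(f has_contour_integral i) (part_circlepath c r a b)"
    "(f has_contour_integral j) (part_circlepath c r b d)"
  shows "(f has_contour_integral (i + j)) (part_circlepath c r a d)"
proof -
  have "((\<lambda>t. f (c + r * cis t) * r * \<i> * cis t) has_integral i) {a..b}"
    using assms(3) has_contour_integral_part_circlepath_iff[OF assms(1)] by blast
  moreover have "((\<lambda>t. f (c + r * cis t) * r * \<i> * cis t) has_integral j) {b..d}"
    using assms(4) has_contour_integral_part_circlepath_iff[OF assms(2)] by blast
  ultimately have "((\<lambda>t. f (c + r * cis t) * r * \<i> * cis t) has_integral (i + j)) {a..d}"
    by (rule has_integral_combine[rotated 2]) (use assms in auto)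
  thus ?thesis using has_contour_integral_part_circlepath_iff[of a d] assms by auto
qed

lemma pcp_split:
  fixes s :: "nat \<Rightarrow> real"
  assumes mono: "\<And>l. s l < s (Suc l)"
    and cont: "\<And>l. f contour_integrable_on (part_circlepath c r (s l) (s (Suc l)))"
  shows "(f has_contour_integral (\<Sum>l<Suc L. contour_integral (part_circlepath c r (s l) (s (Suc l))) f))
           (part_circlepath c r (s 0) (s (Suc L)))"
proof (induction L)
  case 0 thus ?case using has_contour_integral_integral[OF cont[of 0]] by simp
next
  case (Suc L)
  have m: "s 0 < s (Suc L)"
  proof -
    have "s 0 < s (Suc k)" for k by (induction k) (use mono less_trans in auto)
    thus ?thesis by blast
  qed
  show ?case
    using pcp_combine[OF m mono Suc has_contour_integral_integral[OF cont[of "Suc L"]]] by simp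
qed

lemma has_sum_D:
  fixes h :: "nat \<Rightarrow> nat \<Rightarrow> 'b::topological_comm_monoid_add"
  assumes "\<And>i. i < e \<Longrightarrow> (h i has_sum S i) UNIV"
  shows "((\<lambda>(i,n). h i n) has_sum (\<Sum>i<e. S i)) ({..<e} \<times> UNIV)"
proof -
  have h2: "((\<lambda>(i,n). h i n) has_sum S i) ({i} \<times> UNIV)" if "i < e" for i
  proof -
    have inj: "inj (Pair i)" by (auto simp: inj_on_def)
    have "((case_prod h \<circ> Pair i) has_sum S i) UNIV" using assms[OF that] by (simp add: comp_def)
    hence "(case_prod h has_sum S i) (Pair i ` UNIV)" using has_sum_reindex[OF inj] by blast
    moreover have "Pair i ` UNIV = {i} \<times> UNIV" by auto
    ultimately show ?thesis by metis
  qed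
  have "((\<lambda>(i,n). h i n) has_sum (\<Sum>i<e. S i)) (\<Union>i\<in>{..<e}. {i} \<times> UNIV)"
    by (rule sum_has_sum) (use h2 in auto)
  moreover have "(\<Union>i\<in>{..<e}. {i} \<times> (UNIV::nat set)) = {..<e} \<times> UNIV" by auto
  ultimately show ?thesis by simp
qed

lemma geom_has_sum:
  fixes q K :: real
  assumes "0 \<le> q" "q < 1"
  shows "((\<lambda>n. K * q^n) has_sum (K / (1 - q))) UNIV"
proof -
  have "(\<lambda>n. K * q^n) sums (K * (1 / (1 - q)))" by (intro sums_mult geometric_sums) (use assms in auto)
  moreover have "summable (\<lambda>n. norm (K * q^n))"
    using assms by (simp add: norm_mult summable_mult summable_geometric abs_mult power_abs)
  ultimately show ?thesis using norm_summable_imp_has_sum by fastforce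
qed

lemma mps_pack:
  fixes G :: "complex \<Rightarrow> complex" and V :: "complex set"
    and cf :: "nat \<Rightarrow> nat \<Rightarrow> nat \<Rightarrow> complex" and el :: "nat \<Rightarrow> nat"
  assumes P: "P > 0" and el: "\<And>l. l < P \<Longrightarrow> el l > 0"
   and hs: "\<And>l z. l < P \<Longrightarrow> z \<in> V \<Longrightarrow>
          ((\<lambda>(i,n). cf l i n * (z-1)^i * (z^(el l) - 1)^n) has_sum h l z) ({..<el l} \<times> UNIV)"
   and bd: "\<And>l z i n. l < P \<Longrightarrow> z \<in> V \<Longrightarrow> norm (cf l i n * (z-1)^i * (z^(el l) - 1)^n) \<le> K l * q l ^ n"
   and q: "\<And>l. l < P \<Longrightarrow> 0 \<le> q l \<and> q l < 1" and K: "\<And>l. l < P \<Longrightarrow> K l \<ge> 0"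
   and G: "\<And>z. z \<in> V \<Longrightarrow> G z = (\<Sum>l<P. h l z)"
  shows "multi_power_series_at_1 V G"
proof -
  define N where "N = 2 * P"
  define ex where "ex j = (if even j then 1 else el (j div 2))" for j :: nat
  define supp where "supp l idx \<longleftrightarrow> (\<forall>j. j \<noteq> 2*l \<and> j \<noteq> 2*l+1 \<longrightarrow> idx j = 0) \<and> idx (2*l) < el l"
    for l and idx :: "nat \<Rightarrow> nat"
  define Fm where "Fm l = (\<lambda>(i,n) (j::nat). if j = 2*l then i else if j = 2*l+1 then n else (0::nat))" for l
  define D where "D l = {..<el l} \<times> (UNIV :: nat set)" for l
  define cc where "cc idx = (\<Sum>l<P. if supp l idx then cf l (idx (2*l)) (idx (2*l+1)) else 0)" for idx
  define Pz where "Pz z idx = (\<Prod>j<N. (z ^ ex j - 1) ^ idx j)" for z :: complex and idx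
  define piece where "piece l z idx = (if supp l idx then cf l (idx (2*l)) (idx (2*l+1)) else 0) * Pz z idx"
    for l z idx
  define Mb where "Mb l idx = (if supp l idx then K l * q l ^ idx (2*l+1) else 0)" for l idx
  have exN: "\<forall>j<N. ex j > 0" unfolding ex_def N_def using el by auto
  have N1: "N \<ge> 1" unfolding N_def using P by simp
  have prodF: "Pz z idx = (z - 1)^(idx (2*l)) * (z^(el l) - 1)^(idx (2*l+1))"
    if l: "l < P" and s: "supp l idx" for l z idx
  proof -
    have "Pz z idx = (\<Prod>j\<in>{2*l, 2*l+1}. (z ^ ex j - 1) ^ idx j)"
      unfolding Pz_def by (rule prod.mono_neutral_right) (use l s in \<open>auto simp: N_def supp_def\<close>)
    also have "\<dots> = (z - 1)^(idx (2*l)) * (z^(el l) - 1)^(idx (2*l+1))"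
      by (simp add: ex_def)
    finally show ?thesis .
  qed
  have suppF: "supp l (Fm l x)" if "x \<in> D l" for l x using that
    unfolding supp_def Fm_def D_def by (auto split: prod.splits)
  have injF: "inj_on (Fm l) (D l)" for l
  proof (rule inj_onI)
    fix x y assume "x \<in> D l" "y \<in> D l" "Fm l x = Fm l y"
    hence "Fm l x (2*l) = Fm l y (2*l)" "Fm l x (2*l+1) = Fm l y (2*l+1)" by auto
    thus "x = y" unfolding Fm_def by (auto split: prod.splits)
  qed
  have imF: "Fm l ` D l \<subseteq> multi_idx N" if "l < P" for l
    using that unfolding Fm_def multi_idx_def N_def by (auto split: prod.splits)
  have outF: "\<not> supp l x" if "x \<in> multi_idx N - Fm l ` D l" for l x
  proof
    assume s: "supp l x"
    have "x = Fm l (x (2*l), x (2*l+1))"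
      using s unfolding supp_def Fm_def by (auto simp: fun_eq_iff)
    moreover have "(x (2*l), x (2*l+1)) \<in> D l" using s unfolding supp_def D_def by auto
    ultimately show False using that by blast
  qed
  have FmV: "Fm l (i,n) (2*l) = i" "Fm l (i,n) (2*l+1) = n" "Fm l (i,n) (Suc (2*l)) = n" for l i n
    unfolding Fm_def by auto
  have piece_has: "(piece l z has_sum h l z) (multi_idx N)" if l: "l < P" and z: "z \<in> V" for l z
  proof (rule has_sum_piece[OF injF imF[OF l]])
    show "piece l z x = 0" if "x \<in> multi_idx N - Fm l ` D l" for x
      using outF[OF that] unfolding piece_def by simp
    have hsD: "((\<lambda>(i,n). cf l i n * (z-1)^i * (z^(el l) - 1)^n) has_sum h l z) (D l)"
      using hs[OF l z] unfolding D_def .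
    have eqD: "(piece l z \<circ> Fm l) x = (\<lambda>(i,n). cf l i n * (z-1)^i * (z^(el l) - 1)^n) x" if "x \<in> D l" for x
    proof -
      obtain i n where x: "x = (i,n)" by fastforce
      show ?thesis using suppF[OF that] prodF[OF l suppF[OF that]] unfolding x piece_def
        by (simp add: FmV)
    qed
    have iff: "((piece l z \<circ> Fm l) has_sum h l z) (D l) \<longleftrightarrow> ((\<lambda>(i,n). cf l i n * (z-1)^i * (z^(el l) - 1)^n) has_sum h l z) (D l)"
      by (rule has_sum_cong) (rule eqD)
    show "((piece l z \<circ> Fm l) has_sum h l z) (D l)" using iff hsD by (rule iffD2)
  qed
  have Mb_has: "(Mb l has_sum (\<Sum>i<el l. K l / (1 - q l))) (multi_idx N)" if l: "l < P" for l
  proof (rule has_sum_piece[OF injF imF[OF l]])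
    show "Mb l x = 0" if "x \<in> multi_idx N - Fm l ` D l" for x
      using outF[OF that] unfolding Mb_def by simp
    have hsD: "((\<lambda>(i,n). K l * q l ^ n) has_sum (\<Sum>i<el l. K l / (1 - q l))) (D l)"
      unfolding D_def by (rule has_sum_D) (use geom_has_sum q[OF l] in auto)
    have eqD: "(Mb l \<circ> Fm l) x = (\<lambda>(i,n). K l * q l ^ n) x" if "x \<in> D l" for x
    proof -
      obtain i n where x: "x = (i,n)" by fastforce
      show ?thesis using suppF[OF that] unfolding x Mb_def by (simp add: FmV)
    qed
    have iff: "((Mb l \<circ> Fm l) has_sum (\<Sum>i<el l. K l / (1 - q l))) (D l) \<longleftrightarrow> ((\<lambda>(i,n). K l * q l ^ n) has_sum (\<Sum>i<el l. K l / (1 - q l))) (D l)"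
      by (rule has_sum_cong) (rule eqD)
    show "((Mb l \<circ> Fm l) has_sum (\<Sum>i<el l. K l / (1 - q l))) (D l)" using iff hsD by (rule iffD2)
  qed
  define MB where "MB idx = (\<Sum>l<P. Mb l idx)" for idx
  have MBs: "MB summable_on multi_idx N"
  proof -
    have "((\<lambda>idx. \<Sum>l<P. Mb l idx) has_sum (\<Sum>l<P. \<Sum>i<el l. K l / (1 - q l))) (multi_idx N)"
      by (rule has_sum_sum_fun) (use Mb_has in auto)
    thus ?thesis unfolding MB_def summable_on_def by blast
  qed
  have term_eq: "mps_term N ex cc z idx = (\<Sum>l<P. piece l z idx)" for z idx
    unfolding mps_term_def cc_def piece_def Pz_def by (simp add: sum_distrib_right)
  have term_has: "(mps_term N ex cc z has_sum G z) (multi_idx N)" if z: "z \<in> V" for z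
  proof -
    have "((\<lambda>idx. \<Sum>l<P. piece l z idx) has_sum (\<Sum>l<P. h l z)) (multi_idx N)"
      by (rule has_sum_sum_fun) (use piece_has z in auto)
    moreover have "mps_term N ex cc z = (\<lambda>idx. \<Sum>l<P. piece l z idx)" using term_eq by (simp add: fun_eq_iff)
    ultimately show ?thesis using G[OF z] by simp
  qed
  have piece_bd: "norm (piece l z idx) \<le> Mb l idx" if l: "l < P" and z: "z \<in> V" for l z idx
  proof (cases "supp l idx")
    case True
    thus ?thesis using bd[OF l z] prodF[OF l True] unfolding piece_def Mb_def by (simp add: mult.assoc)
  next
    case False thus ?thesis unfolding piece_def Mb_def by simp
  qed
  have term_bd: "norm (mps_term N ex cc z idx) \<le> MB idx" if z: "z \<in> V" for z idx
  proof -
    have "norm (mps_term N ex cc z idx) \<le> (\<Sum>l<P. norm (piece l z idx))"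
      unfolding term_eq by (rule norm_sum)
    also have "\<dots> \<le> MB idx" unfolding MB_def by (intro sum_mono piece_bd z) auto
    finally show ?thesis .
  qed
  have norm_s: "(\<lambda>i. norm (mps_term N ex cc z i)) summable_on multi_idx N" if z: "z \<in> V" for z
    by (rule summable_on_comparison_test[OF MBs]) (use term_bd z in auto)
  have ul1: "uniform_limit V (\<lambda>F z. \<Sum>i\<in>F. mps_term N ex cc z i) G (finite_subsets_at_top (multi_idx N))"
    by (rule uniform_has_sum_Mtest[OF term_has term_bd MBs])
  have ul2: "uniform_limit V (\<lambda>F z. \<Sum>i\<in>F. norm (mps_term N ex cc z i))
            (\<lambda>z. infsum (\<lambda>i. norm (mps_term N ex cc z i)) (multi_idx N)) (finite_subsets_at_top (multi_idx N))"
    by (rule uniform_has_sum_Mtest[OF _ _ MBs]) (use norm_s term_bd in auto)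
  show ?thesis unfolding multi_power_series_at_1_def
    by (rule exI[of _ N], rule exI[of _ ex], rule exI[of _ cc]) (use N1 exN norm_s term_has ul1 ul2 in auto)
qed

lemma mps_from_circle:
  fixes G :: "complex \<Rightarrow> complex" and V :: "complex set" and Es :: "nat set" and \<sigma> :: "nat \<Rightarrow> real"
    and c :: complex
  assumes holG: "G holomorphic_on W" and oW: "open W" and sub: "cball c r \<subseteq> W" and r: "r > 0"
    and V: "V \<subseteq> ball c r"
    and Es0: "0 \<notin> Es" and \<sigma>0: "\<And>e. e \<in> Es \<Longrightarrow> \<sigma> e \<ge> 0"
    and Vb1: "\<And>z. z \<in> V \<Longrightarrow> norm (z - 1) \<le> 1"
    and Vbe: "\<And>z e. z \<in> V \<Longrightarrow> e \<in> Es \<Longrightarrow> norm (z^e - 1) \<le> \<sigma> e"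
    and cover: "\<And>t. dist c t = r \<Longrightarrow> \<exists>e\<in>Es. norm (t^e - 1) > \<sigma> e"
  shows "multi_power_series_at_1 V G"
proof -
  define \<gamma> where "\<gamma> s = c + r * cis s" for s
  have \<gamma>r: "dist c (\<gamma> s) = r" for s unfolding \<gamma>_def dist_norm using r by (simp add: norm_mult)
  have cont\<gamma>: "continuous_on UNIV \<gamma>" unfolding \<gamma>_def by (intro continuous_intros)
  define U where "U e = {s. \<sigma> e < norm ((\<gamma> s)^e - 1)}" for e
  have oU: "open (U e)" for e unfolding U_def
    by (rule open_Collect_less) (intro continuous_intros cont\<gamma>[THEN continuous_on_subset] | simp)+
  have covS: "{0..2*pi} \<subseteq> \<Union>(U ` Es)" using cover \<gamma>r unfolding U_def by blast
  obtain \<delta> where \<delta>: "\<delta> > 0" "\<And>x. x \<in> {0..2*pi} \<Longrightarrow> \<exists>G\<in>U ` Es. ball x \<delta> \<subseteq> G"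
    using Heine_Borel_lemma[OF compact_Icc covS] oU by blast
  obtain P :: nat where P: "2*pi/\<delta> < real P" using reals_Archimedean2 by blast
  have P0: "P > 0"
  proof -
    have "0 < 2*pi/\<delta>" using \<delta>(1) by simp
    with P have "0 < real P" by linarith
    thus ?thesis by simp
  qed
  have Pd: "2*pi/P < \<delta>" using P \<delta> P0 by (simp add: field_simps)
  define s where "s l = 2*pi*l/P" for l :: nat
  have smono: "s l < s (Suc l)" for l unfolding s_def using P0 by (simp add: field_simps)
  have s0: "s 0 = 0" and sP: "s P = 2*pi" unfolding s_def using P0 by auto
  have el_ex: "\<exists>e. e \<in> Es \<and> ball (s l) \<delta> \<subseteq> U e" if "l < P" for l
  proof -
    have "s l \<in> {0..2*pi}" unfolding s_def using that P0 by (auto simp: field_simps)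
    thus ?thesis using \<delta>(2) by blast
  qed
  have "\<forall>l. \<exists>e. l < P \<longrightarrow> e \<in> Es \<and> ball (s l) \<delta> \<subseteq> U e" using el_ex by blast
  from choice[OF this] obtain el where el0: "\<forall>l. l < P \<longrightarrow> el l \<in> Es \<and> ball (s l) \<delta> \<subseteq> U (el l)"
    by blast
  have el: "\<And>l. l < P \<Longrightarrow> el l \<in> Es \<and> ball (s l) \<delta> \<subseteq> U (el l)" using el0 by blast
  define arc where "arc l = part_circlepath c r (s l) (s (Suc l))" for l
  have arcimg: "path_image (arc l) = \<gamma> ` {s l..s (Suc l)}" for l
    unfolding arc_def path_image_part_circlepath' \<gamma>_def closed_segment_eq_real_ivl
    using smono[of l] by simp
  have arcS: "path_image (arc l) \<subseteq> sphere c r" for l using arcimg \<gamma>r by auto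
  have seg: "{s l..s (Suc l)} \<subseteq> ball (s l) \<delta>" for l
  proof
    fix x assume "x \<in> {s l..s (Suc l)}"
    moreover have "s (Suc l) - s l = 2*pi/P" unfolding s_def by (simp add: field_simps add_divide_distrib)
    ultimately show "x \<in> ball (s l) \<delta>" using Pd by (auto simp: dist_real_def)
  qed
  have far: "\<sigma> (el l) < norm (t^(el l) - 1)" if l: "l < P" and t: "t \<in> path_image (arc l)" for l t
  proof -
    obtain x where "x \<in> {s l..s (Suc l)}" "t = \<gamma> x" using t arcimg by auto
    hence "x \<in> ball (s l) \<delta>" "t = \<gamma> x" using seg[of l] by auto
    thus ?thesis using el[OF l] unfolding U_def by auto
  qed
  have contG: "continuous_on W G" using holG holomorphic_on_imp_continuous_on by blast
  have sphW: "sphere c r \<subseteq> W" using sub by auto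
  have contGarc: "continuous_on (path_image (arc l)) G" for l
    using contG arcS sphW continuous_on_subset by blast
  have pieces: "\<exists>cf K q. K \<ge> 0 \<and> 0 \<le> q \<and> q < 1 \<and>
      (\<forall>z\<in>V. ((\<lambda>(i,n). cf i n * (z-1)^i * (z^(el l) - 1)^n) has_sum
          contour_integral (arc l) (\<lambda>t. G t / (t - z)) / (2 * pi * \<i>)) ({..<el l} \<times> UNIV)) \<and>
      (\<forall>z\<in>V. \<forall>i n. norm (cf i n * (z-1)^i * (z^(el l) - 1)^n) \<le> K * q ^ n)" if l: "l < P" for l
  proof -
    define e where "e = el l"
    have e0: "e > 0" using el[OF l] Es0 unfolding e_def by (metis gr0I)
    have cpt: "compact (path_image (arc l))" unfolding arc_def by (intro compact_path_image) simp
    have ne: "path_image (arc l) \<noteq> {}" unfolding arcimg using smono[of l] by auto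
    have cn: "continuous_on (path_image (arc l)) (\<lambda>t. norm (t^e - 1))" by (intro continuous_intros)
    obtain t0 where t0: "t0 \<in> path_image (arc l)" "\<And>t. t \<in> path_image (arc l) \<Longrightarrow> norm (t0^e - 1) \<le> norm (t^e - 1)"
      using continuous_attains_inf[OF cpt ne cn] by blast
    define \<rho>' where "\<rho>' = norm (t0^e - 1)"
    have \<rho>\<sigma>: "\<rho>' > \<sigma> e" using far[OF l t0(1)] unfolding \<rho>'_def e_def by simp
    have \<sigma>e: "\<sigma> e \<ge> 0" using \<sigma>0 el[OF l] unfolding e_def by blast
    obtain coef K where K: "K \<ge> 0"
      "\<And>z. norm (z-1) \<le> 1 \<Longrightarrow> norm (z^e - 1) \<le> \<sigma> e \<Longrightarrow>
         ((\<lambda>(i,n). coef i n * (z-1)^i * (z^e-1)^n) has_sum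
            contour_integral (part_circlepath c r (s l) (s (Suc l))) (\<lambda>t. G t / (t - z))) ({..<e} \<times> UNIV)"
      "\<And>z i n. norm (z-1) \<le> 1 \<Longrightarrow> norm (z^e - 1) \<le> \<sigma> e \<Longrightarrow>
         norm (coef i n * (z-1)^i * (z^e-1)^n) \<le> K * (\<sigma> e/\<rho>')^n"
      by (rule arc_expansion[OF contGarc[of l, unfolded arc_def] r smono e0 \<sigma>e \<rho>\<sigma>])
         (use t0 in \<open>auto simp: \<rho>'_def arc_def\<close>)
    define cf where "cf i n = coef i n / (2 * pi * \<i>)" for i n
    have hs: "((\<lambda>(i,n). cf i n * (z-1)^i * (z^e - 1)^n) has_sum
          contour_integral (arc l) (\<lambda>t. G t / (t - z)) / (2 * pi * \<i>)) ({..<e} \<times> UNIV)"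
      if z: "z \<in> V" for z
    proof -
      have "((\<lambda>x. (\<lambda>(i,n). coef i n * (z-1)^i * (z^e-1)^n) x * (1 / (2 * pi * \<i>))) has_sum
            contour_integral (arc l) (\<lambda>t. G t / (t - z)) * (1 / (2 * pi * \<i>))) ({..<e} \<times> UNIV)"
        by (rule has_sum_cmult_left) (use K(2) Vb1 Vbe z el[OF l] in \<open>auto simp: arc_def e_def\<close>)
      moreover have "(\<lambda>x. (\<lambda>(i,n). coef i n * (z-1)^i * (z^e-1)^n) x * (1 / (2 * pi * \<i>))) =
                     (\<lambda>(i,n). cf i n * (z-1)^i * (z^e - 1)^n)"
        unfolding cf_def by (auto simp: fun_eq_iff)
      ultimately show ?thesis by simp
    qed
    have bd: "norm (cf i n * (z-1)^i * (z^e - 1)^n) \<le> K * (\<sigma> e/\<rho>')^n" if z: "z \<in> V" for z i n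
    proof -
      have "norm (cf i n * (z-1)^i * (z^e - 1)^n) = norm (coef i n * (z-1)^i * (z^e-1)^n) / (2*pi)"
        unfolding cf_def by (simp add: norm_mult norm_divide)
      also have "\<dots> \<le> norm (coef i n * (z-1)^i * (z^e-1)^n)"
        using frac_le[of "norm (coef i n * (z-1)^i * (z^e-1)^n)" "norm (coef i n * (z-1)^i * (z^e-1)^n)" 1 "2*pi"] pi_gt3
        by simp
      also have "\<dots> \<le> K * (\<sigma> e/\<rho>')^n" using K(3) Vb1 Vbe z el[OF l] unfolding e_def by blast
      finally show ?thesis .
    qed
    have q0: "0 \<le> \<sigma> e/\<rho>'" and q1: "\<sigma> e/\<rho>' < 1" using \<sigma>e \<rho>\<sigma> by auto
    show ?thesis
      apply (rule exI[of _ cf], rule exI[of _ K], rule exI[of _ "\<sigma> e/\<rho>'"])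
      using K(1) q0 q1 hs bd unfolding e_def by blast
  qed
  define Pr where "Pr l x \<longleftrightarrow> snd (fst x) \<ge> 0 \<and> 0 \<le> snd x \<and> snd x < 1 \<and>
    (\<forall>z\<in>V. ((\<lambda>(i,n). fst (fst x) i n * (z-1)^i * (z^(el l) - 1)^n) has_sum
        contour_integral (arc l) (\<lambda>t. G t / (t - z)) / (2 * pi * \<i>)) ({..<el l} \<times> UNIV)) \<and>
    (\<forall>z\<in>V. \<forall>i n. norm (fst (fst x) i n * (z-1)^i * (z^(el l) - 1)^n) \<le> snd (fst x) * snd x ^ n)"
    for l and x :: "((nat \<Rightarrow> nat \<Rightarrow> complex) \<times> real) \<times> real"
  have "\<forall>l. \<exists>x. l < P \<longrightarrow> Pr l x"
  proof (intro allI)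
    fix l
    show "\<exists>x. l < P \<longrightarrow> Pr l x"
    proof (cases "l < P")
      case True
      then obtain cf K q where "K \<ge> 0 \<and> 0 \<le> q \<and> q < 1 \<and>
        (\<forall>z\<in>V. ((\<lambda>(i,n). cf i n * (z-1)^i * (z^(el l) - 1)^n) has_sum
            contour_integral (arc l) (\<lambda>t. G t / (t - z)) / (2 * pi * \<i>)) ({..<el l} \<times> UNIV)) \<and>
        (\<forall>z\<in>V. \<forall>i n. norm (cf i n * (z-1)^i * (z^(el l) - 1)^n) \<le> K * q ^ n)"
        using pieces by blast
      hence "Pr l ((cf, K), q)" unfolding Pr_def by simp
      thus ?thesis by blast
    qed auto
  qed
  from choice[OF this] obtain X where X: "\<forall>l. l < P \<longrightarrow> Pr l (X l)" by blast
  define cf where "cf l = fst (fst (X l))" for l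
  define K where "K l = snd (fst (X l))" for l
  define q where "q l = snd (X l)" for l
  have cfKq: "\<And>l. l < P \<Longrightarrow> K l \<ge> 0 \<and> 0 \<le> q l \<and> q l < 1 \<and>
      (\<forall>z\<in>V. ((\<lambda>(i,n). cf l i n * (z-1)^i * (z^(el l) - 1)^n) has_sum
          contour_integral (arc l) (\<lambda>t. G t / (t - z)) / (2 * pi * \<i>)) ({..<el l} \<times> UNIV)) \<and>
      (\<forall>z\<in>V. \<forall>i n. norm (cf l i n * (z-1)^i * (z^(el l) - 1)^n) \<le> K l * q l ^ n)"
    using X unfolding Pr_def cf_def K_def q_def by blast
  have Gsum: "G z = (\<Sum>l<P. contour_integral (arc l) (\<lambda>t. G t / (t - z)) / (2 * pi * \<i>))" if z: "z \<in> V" for z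
  proof -
    have zb: "norm (z - c) < r" using V z by (auto simp: dist_norm norm_minus_commute)
    have "((\<lambda>u. G u / (u - z)) has_contour_integral (2 * of_real pi * \<i> * G z)) (circlepath c r)"
    proof (rule Cauchy_integral_circlepath)
      show "continuous_on (cball c r) G" using contG sub continuous_on_subset by blast
      show "G holomorphic_on ball c r" using holG sub ball_subset_cball holomorphic_on_subset by blast
      show "norm (z - c) < r" by (rule zb)
    qed
    moreover have intarc: "(\<lambda>u. G u / (u - z)) contour_integrable_on (part_circlepath c r (s l) (s (Suc l)))" for l
    proof (rule contour_integrable_continuous_part_circlepath)
      have "u \<noteq> z" if "u \<in> path_image (arc l)" for u using arcS[of l] that zb by (auto simp: dist_norm norm_minus_commute)
      thus "continuous_on (path_image (part_circlepath c r (s l) (s (Suc l)))) (\<lambda>u. G u / (u - z))"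
        using contGarc[of l] unfolding arc_def by (intro continuous_intros) auto
    qed
    have "((\<lambda>u. G u / (u - z)) has_contour_integral (\<Sum>l<Suc (P - 1). contour_integral (part_circlepath c r (s l) (s (Suc l))) (\<lambda>u. G u / (u - z))))
           (part_circlepath c r (s 0) (s (Suc (P - 1))))"
      by (rule pcp_split[where s=s and f="\<lambda>u. G u / (u - z)" and c=c and r=r, OF smono intarc])
    hence "((\<lambda>u. G u / (u - z)) has_contour_integral (\<Sum>l<P. contour_integral (arc l) (\<lambda>u. G u / (u - z))))
           (circlepath c r)" using P0 s0 sP unfolding circlepath_def arc_def by simp
    ultimately have "2 * of_real pi * \<i> * G z = (\<Sum>l<P. contour_integral (arc l) (\<lambda>u. G u / (u - z)))"
      using has_contour_integral_unique by blast
    thus ?thesis by (simp add: sum_divide_distrib[symmetric] field_simps)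
  qed
  show ?thesis
  proof (rule mps_pack[of P el V cf "\<lambda>l z. contour_integral (arc l) (\<lambda>t. G t / (t - z)) / (2 * pi * \<i>)" K q G])
    show "0 < P" by (rule P0)
    show "0 < el l" if "l < P" for l using el[OF that] Es0 by (metis gr0I)
    show "((\<lambda>(i,n). cf l i n * (z-1)^i * (z^(el l) - 1)^n) has_sum
          contour_integral (arc l) (\<lambda>t. G t / (t - z)) / (2 * pi * \<i>)) ({..<el l} \<times> UNIV)"
      if "l < P" "z \<in> V" for l z using cfKq[OF that(1)] that(2) by blast
    show "norm (cf l i n * (z-1)^i * (z^(el l) - 1)^n) \<le> K l * q l ^ n"
      if "l < P" "z \<in> V" for l z i n using cfKq[OF that(1)] that(2) by blast
    show "0 \<le> q l \<and> q l < 1" if "l < P" for l using cfKq[OF that] by blast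
    show "0 \<le> K l" if "l < P" for l using cfKq[OF that] by blast
    show "G z = (\<Sum>l<P. contour_integral (arc l) (\<lambda>t. G t / (t - z)) / (2 * pi * \<i>))" if "z \<in> V" for z
      using Gsum[OF that] .
  qed
qed

lemma norm_sq_minus1: "norm (w - 1)^2 = norm w ^ 2 - 2 * Re w + 1"
  by (simp only: cmod_power2) (simp add: power2_eq_square algebra_simps)

lemma pow_rcis: "t^e = rcis (norm t ^ e) (real e * Arg t)"
  by (metis DeMoivre2 rcis_cmod_Arg)

lemma re_pow_arg: "Re (t^e) = norm t ^ e * cos (real e * Arg t)"
  by (subst pow_rcis) simp

lemma omega_basic:
  assumes "z \<in> Omega_m m"
  shows "z \<noteq> 0" "norm z < 2 powr (1/m)" "\<bar>Arg z\<bar> < pi/(2*m)"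
  using assms unfolding Omega_m_def by auto

lemma omega_re:
  assumes "m \<ge> 1" "z \<in> Omega_m m"
  shows "Re z > 0"
proof -
  have "pi/(2*m) \<le> pi/2" using assms(1) by (simp add: field_simps)
  hence "\<bar>Arg z\<bar> < pi/2" using omega_basic(3)[OF assms(2)] by linarith
  thus ?thesis using Arg_Re_pos omega_basic(1)[OF assms(2)] by blast
qed

lemma omega_pow:
  assumes m: "m \<ge> 1" and z: "z \<in> Omega_m m" and e: "1 \<le> e" "2*e \<le> m"
  shows "norm (z^e - 1) < 1"
proof -
  define r where "r = norm z"
  define \<theta> where "\<theta> = Arg z"
  have r0: "r > 0" using omega_basic(1)[OF z] unfolding r_def by simp
  have rlt: "r < 2 powr (1/m)" using omega_basic(2)[OF z] unfolding r_def .
  have "r^e < (2 powr (1/m))^e" using rlt r0 e by (intro power_strict_mono) auto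
  also have "\<dots> = 2 powr (e/m)"
    by (simp add: powr_realpow[symmetric] powr_powr)
  also have "\<dots> \<le> 2 powr (1/2)" using e m by (intro powr_mono) (auto simp: field_simps)
  also have "\<dots> = sqrt 2" by (simp add: powr_half_sqrt)
  finally have re: "r^e < sqrt 2" .
  have th: "\<bar>e * \<theta>\<bar> \<le> pi/4"
  proof -
    have "\<bar>e * \<theta>\<bar> = e * \<bar>\<theta>\<bar>" by (simp add: abs_mult)
    also have "\<dots> \<le> e * (pi/(2*m))" using omega_basic(3)[OF z] unfolding \<theta>_def
      by (intro mult_left_mono) auto
    also have "\<dots> \<le> pi/4" using e m pi_gt_zero by (simp add: field_simps)
    finally show ?thesis .
  qed
  have "cos (pi/4) \<le> cos \<bar>e * \<theta>\<bar>" using th by (intro cos_monotone_0_pi_le) auto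
  hence cs: "sqrt 2 / 2 \<le> cos (e * \<theta>)" by (simp add: cos_45)
  have "norm (z^e - 1)^2 = (r^e)^2 - 2 * (r^e * cos (e*\<theta>)) + 1"
    unfolding norm_sq_minus1 re_pow_arg r_def \<theta>_def by (simp add: norm_power)
  also have "\<dots> < 1"
  proof -
    have "r^e * cos (e*\<theta>) \<ge> r^e * (sqrt 2/2)" using cs r0 by (intro mult_left_mono) auto
    moreover have "(r^e)^2 < r^e * sqrt 2" using re r0 by (simp add: power2_eq_square)
    ultimately show ?thesis by linarith
  qed
  finally have sq: "norm (z^e - 1)^2 < 1" .
  show ?thesis
  proof (rule ccontr)
    assume "\<not> norm (z^e - 1) < 1"
    hence "1 \<le> norm (z^e - 1)^2" by (intro one_le_power) auto
    thus False using sq by linarith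
  qed
qed

lemma omega_m:
  assumes "m \<ge> 1" "z \<in> Omega_m m"
  shows "norm (z^m - 1) \<le> 3"
proof -
  have "norm z ^ m < (2 powr (1/m))^m"
    using omega_basic[OF assms(2)] assms(1) by (intro power_strict_mono) auto
  also have "\<dots> = 2" using assms(1) by (simp add: powr_realpow[symmetric] powr_powr)
  finally have "norm (z^m) < 2" by (simp add: norm_power)
  thus ?thesis using norm_triangle_ineq4[of "z^m" 1] by simp
qed

lemma omega_sector:
  assumes m: "m \<ge> 1" and z: "z \<in> Omega_m m" and \<beta>: "pi/(2*m) \<le> arctan \<tau>"
  shows "\<bar>Im z\<bar> < \<tau> * Re z"
proof -
  have re: "Re z > 0" by (rule omega_re[OF m z])
  define u where "u = Im z / Re z"
  have A: "Arg z = arctan u" unfolding u_def by (rule arg_conv_arctan[OF re])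
  have B: "\<bar>arctan u\<bar> = arctan \<bar>u\<bar>"
  proof (cases "u \<ge> 0")
    case True
    hence "arctan u \<ge> 0" by simp
    thus ?thesis using True by simp
  next
    case False
    hence "arctan u < 0" by simp
    hence "\<bar>arctan u\<bar> = - arctan u" by simp
    also have "\<dots> = arctan (- u)" by (simp only: arctan_minus)
    also have "- u = \<bar>u\<bar>" using False by simp
    finally show ?thesis .
  qed
  have "arctan \<bar>u\<bar> < arctan \<tau>" using omega_basic(3)[OF z] \<beta> A B by linarith
  hence C: "\<bar>u\<bar> < \<tau>" by (simp only: arctan_less_iff)
  have "\<bar>Im z\<bar> = \<bar>u\<bar> * Re z" unfolding u_def using re by (simp add: abs_divide)
  also have "\<dots> < \<tau> * Re z" using C re by (intro mult_strict_right_mono) auto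
  finally show ?thesis .
qed

lemma cover_arg:
  fixes t :: complex
  assumes t: "t \<noteq> 0" and \<beta>: "\<beta> \<le> \<bar>Arg t\<bar>" "0 < \<beta>"
  shows "\<exists>e. 1 \<le> e \<and> e \<le> nat \<lceil>pi/(2*\<beta>)\<rceil> + 1 \<and> norm (t^e - 1) > 1"
proof -
  define \<psi> where "\<psi> = \<bar>Arg t\<bar>"
  have \<psi>0: "\<psi> > 0" and \<psi>pi: "\<psi> \<le> pi" using \<beta> Arg_bounded[of t] unfolding \<psi>_def by auto
  define e where "e = nat \<lfloor>pi/(2*\<psi>)\<rfloor> + 1"
  have fl0: "0 \<le> \<lfloor>pi/(2*\<psi>)\<rfloor>" using \<psi>0 by simp
  have e1: "real e = of_int \<lfloor>pi/(2*\<psi>)\<rfloor> + 1" unfolding e_def using fl0 by simp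
  have lo: "e * \<psi> > pi/2"
  proof -
    have "pi/(2*\<psi>) < e" unfolding e1 by linarith
    thus ?thesis using \<psi>0 by (simp add: field_simps)
  qed
  have hi: "e * \<psi> \<le> pi/2 + \<psi>"
  proof -
    have "e \<le> pi/(2*\<psi>) + 1" unfolding e1 by linarith
    hence "e * \<psi> \<le> (pi/(2*\<psi>) + 1) * \<psi>" using \<psi>0 by (intro mult_right_mono) auto
    also have "(pi/(2*\<psi>) + 1) * \<psi> = pi/2 + \<psi>" using \<psi>0 by (simp add: field_simps)
    finally show ?thesis .
  qed
  have hi2: "e * \<psi> \<le> pi"
  proof (cases "\<psi> \<le> pi/2")
    case True thus ?thesis using hi by linarith
  next
    case False
    hence "pi/(2*\<psi>) < 1" using \<psi>0 by (simp add: field_simps)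
    hence "\<lfloor>pi/(2*\<psi>)\<rfloor> = 0" using fl0 by linarith
    hence "e = 1" unfolding e_def by simp
    thus ?thesis using \<psi>pi by simp
  qed
  have cneg: "cos (e * \<psi>) < 0"
  proof -
    have "0 < cos (e * \<psi> - pi)" by (rule cos_gt_zero_pi) (use lo hi2 \<psi>pi in auto)
    thus ?thesis by simp
  qed
  have "cos (e * Arg t) = cos (e * \<psi>)" unfolding \<psi>_def by (cases "Arg t \<ge> 0") auto
  hence reneg: "Re (t^e) < 0" using cneg t by (simp add: re_pow_arg mult_pos_neg)
  have "norm (t^e - 1)^2 > 1" unfolding norm_sq_minus1 using reneg zero_le_power2[of "norm (t^e)"] by linarith
  hence gt: "norm (t^e - 1) > 1"
  proof -
    assume sq: "norm (t^e - 1)^2 > 1"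
    show ?thesis
    proof (rule ccontr)
      assume "\<not> 1 < norm (t^e - 1)"
      hence "norm (t^e - 1)^2 \<le> 1" by (intro power_le_one) auto
      thus False using sq by linarith
    qed
  qed
  have "e \<le> nat \<lceil>pi/(2*\<beta>)\<rceil> + 1"
  proof -
    have "pi/(2*\<psi>) \<le> pi/(2*\<beta>)" using \<beta> \<psi>0 unfolding \<psi>_def by (intro divide_left_mono) auto
    moreover have "of_int \<lfloor>pi/(2*\<psi>)\<rfloor> \<le> pi/(2*\<psi>)" by (rule of_int_floor_le)
    moreover have "pi/(2*\<beta>) \<le> of_int \<lceil>pi/(2*\<beta>)\<rceil>" by (rule le_of_int_ceiling)
    ultimately have "(of_int \<lfloor>pi/(2*\<psi>)\<rfloor> :: real) \<le> of_int \<lceil>pi/(2*\<beta>)\<rceil>" by linarith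
    hence "\<lfloor>pi/(2*\<psi>)\<rfloor> \<le> \<lceil>pi/(2*\<beta>)\<rceil>" by (simp only: of_int_le_iff)
    thus ?thesis unfolding e_def by linarith
  qed
  thus ?thesis using gt by (intro exI[of _ e]) (auto simp: e_def)
qed

lemma abs_arctan: "\<bar>arctan u\<bar> = arctan \<bar>u\<bar>"
proof (cases "u \<ge> 0")
  case True
  hence "arctan u \<ge> 0" by simp
  thus ?thesis using True by simp
next
  case False
  hence "arctan u < 0" by simp
  hence "\<bar>arctan u\<bar> = - arctan u" by simp
  also have "\<dots> = arctan (- u)" by (simp only: arctan_minus)
  also have "- u = \<bar>u\<bar>" using False by simp
  finally show ?thesis .
qed

lemma Qineq:
  fixes b t2 X0 x :: real
  assumes "0 < b" "b \<le> 1" "t2 = b/16" "1 \<le> X0" "X0 \<le> 1 + b/2" "0 \<le> x" "x \<le> X0"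
  shows "(x - 1/2)^2 + t2 * x^2 \<le> (1/2 + b)^2"
proof -
  have e1: "(x - 1/2)^2 = x^2 - x + 1/4" by (simp add: power2_eq_square algebra_simps)
  have e2: "(1/2 + b)^2 = 1/4 + b + b^2" by (simp add: power2_eq_square algebra_simps)
  have b2: "b^2 \<ge> 0" by simp
  show ?thesis
  proof (cases "x \<le> 1")
    case True
    have "t2 * x^2 \<le> t2 * 1" using True assms by (intro mult_left_mono) (auto simp: power_le_one)
    moreover have "x * (1 - x) \<ge> 0" using True assms by auto
    moreover have "x * (1 - x) = x - x^2" by (simp add: power2_eq_square algebra_simps)
    ultimately show ?thesis using assms e1 e2 b2 by linarith
  next
    case False
    have x2: "x^2 \<le> (1 + b/2)^2" using assms False by (intro power_mono) auto
    have "(1 + b/2)^2 \<le> (3/2)^2" using assms by (intro power_mono) auto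
    hence x3: "x^2 \<le> 9/4" using x2 by (simp add: power2_eq_square)
    have "(b/16) * x^2 \<le> (b/16) * (9/4)" using x3 assms by (intro mult_left_mono) auto
    hence "t2 * x^2 \<le> (b/16) * (9/4)" unfolding assms(3) .
    moreover have "x * (x - 1) \<le> (1 + b/2) * (b/2)" using False assms by (intro mult_mono) auto
    moreover have "x * (x - 1) = x^2 - x" by (simp add: power2_eq_square algebra_simps)
    moreover have "(1 + b/2) * (b/2) = b/2 + b^2/4" by (simp add: power2_eq_square algebra_simps)
    ultimately show ?thesis using assms e1 e2 b2 by linarith
  qed
qed

lemma norm_half_sq: "norm (p - 1/2)^2 = (Re p - 1/2)^2 + (Im p)^2"
  by (simp add: cmod_power2)

lemma geometry:
  fixes d :: real assumes d: "0 < d" "d \<le> 1"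
  shows "\<exists>m::nat. \<exists>\<rho>::real. \<exists>Es::nat set. \<exists>\<sigma>::nat \<Rightarrow> real. m \<ge> 1 \<and> \<rho> > 0 \<and>
     cball (1/2::complex) \<rho> \<subseteq> ball 0 1 \<union> ball 1 d \<and> Omega_m m \<subseteq> ball (1/2) \<rho> \<and> 0 \<notin> Es \<and>
     (\<forall>e\<in>Es. \<sigma> e \<ge> 0) \<and> (\<forall>z\<in>Omega_m m. norm (z-1) \<le> 1) \<and>
     (\<forall>z\<in>Omega_m m. \<forall>e\<in>Es. norm (z^e-1) \<le> \<sigma> e) \<and>
     (\<forall>t::complex. dist (1/2) t = \<rho> \<longrightarrow> (\<exists>e\<in>Es. \<sigma> e < norm (t^e - 1)))"
proof -
  define b where "b = d^2/8"
  have "d^2 \<le> 1" using d by (intro power_le_one) auto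
  hence b0: "0 < b" and b1: "b \<le> 1" unfolding b_def using d by auto
  have db: "d^2 = 8*b" unfolding b_def by simp
  define \<tau> where "\<tau> = sqrt b / 4"
  have \<tau>0: "\<tau> > 0" unfolding \<tau>_def using b0 by simp
  have \<tau>2: "\<tau>^2 = b/16" unfolding \<tau>_def using b0 by (simp add: power_divide)
  define \<beta> where "\<beta> = arctan \<tau>"
  have \<beta>0: "\<beta> > 0" unfolding \<beta>_def using \<tau>0 by (metis arctan_less_iff arctan_zero_zero)
  define E where "E = nat \<lceil>pi/(2*\<beta>)\<rceil> + 1"
  have E1: "E \<ge> 1" unfolding E_def by simp
  have Eb: "pi/(2*\<beta>) \<le> E"
  proof -
    have "pi/(2*\<beta>) \<le> of_int \<lceil>pi/(2*\<beta>)\<rceil>" by (rule le_of_int_ceiling)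
    also have "\<dots> \<le> real (nat \<lceil>pi/(2*\<beta>)\<rceil>)" by linarith
    finally show ?thesis unfolding E_def by simp
  qed
  define m where "m = 4*E + nat \<lceil>6/b\<rceil> + 1"
  have m1: "m \<ge> 1" unfolding m_def by simp
  have mE: "2*E \<le> m" "E < m" unfolding m_def by auto
  have m6: "6/b \<le> real m"
  proof -
    have "6/b \<le> of_int \<lceil>6/b\<rceil>" by (rule le_of_int_ceiling)
    also have "\<dots> \<le> real (nat \<lceil>6/b\<rceil>)" by linarith
    also have "\<dots> \<le> real m" unfolding m_def by simp
    finally show ?thesis .
  qed
  have m\<beta>: "pi/(2*m) \<le> arctan \<tau>"
  proof -
    have "pi/(2*\<beta>) \<le> real m" using Eb mE by linarith
    hence "pi \<le> real m * (2*\<beta>)" using \<beta>0 by (simp add: field_simps)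
    thus ?thesis unfolding \<beta>_def[symmetric] using m1 by (simp add: field_simps)
  qed
  define X0 where "X0 = 4 powr (1/m)"
  have X01: "1 \<le> X0" unfolding X0_def by (intro ge_one_powr_ge_zero) auto
  have X0m: "X0^m = 4" unfolding X0_def using m1 by (simp add: powr_realpow[symmetric] powr_powr)
  have X0b: "X0 \<le> 1 + b/2"
  proof -
    have "1 + real m * (b/2) \<le> (1 + b/2)^m" by (rule Bernoulli_inequality) (use b0 in auto)
    moreover have "real m * (b/2) \<ge> 3" using m6 b0 by (simp add: field_simps)
    ultimately have "4 \<le> (1 + b/2)^m" by linarith
    hence "X0 \<le> ((1 + b/2)^m) powr (1/m)" unfolding X0_def by (intro powr_mono2) auto
    also have "\<dots> = 1 + b/2" using m1 b0
      by (simp add: powr_realpow[symmetric] powr_powr)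
    finally show ?thesis .
  qed
  have X02: "2 powr (1/m) \<le> X0" unfolding X0_def by (intro powr_mono2) auto
  define \<rho> where "\<rho> = 1/2 + b"
  have \<rho>0: "\<rho> > 0" unfolding \<rho>_def using b0 by simp
  define Es where "Es = {1..E} \<union> {m}"
  define \<sigma> where "\<sigma> e = (if e = m then 3 else (1::real))" for e
  have Q: "(x - 1/2)^2 + \<tau>^2 * x^2 \<le> \<rho>^2" if "0 \<le> x" "x \<le> X0" for x
    unfolding \<rho>_def by (rule Qineq[OF b0 b1 \<tau>2 X01 X0b that])
  have cb: "cball (1/2::complex) \<rho> \<subseteq> ball 0 1 \<union> ball 1 d"
  proof
    fix p :: complex assume p: "p \<in> cball (1/2) \<rho>"
    show "p \<in> ball 0 1 \<union> ball 1 d"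
    proof (cases "norm p < 1")
      case True thus ?thesis by simp
    next
      case False
      have "norm (p - 1/2) \<le> \<rho>" using p by (simp add: dist_norm norm_minus_commute)
      hence "norm (p - 1/2)^2 \<le> \<rho>^2" by (intro power_mono) auto
      hence h1: "(Re p - 1/2)^2 + (Im p)^2 \<le> \<rho>^2" by (simp add: norm_half_sq)
      have "1 \<le> norm p ^ 2" using False by (simp add: one_le_power)
      hence h2: "1 \<le> (Re p)^2 + (Im p)^2" by (simp add: cmod_power2)
      have h3: "norm (p - 1)^2 = (Re p - 1)^2 + (Im p)^2" by (simp add: cmod_power2)
      have ex1: "(Re p - 1/2)^2 = (Re p)^2 - Re p + 1/4" by (simp add: power2_eq_square algebra_simps)
      have ex2: "(Re p - 1)^2 = (Re p)^2 - 2 * Re p + 1" by (simp add: power2_eq_square algebra_simps)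
      have ex3: "\<rho>^2 = 1/4 + b + b^2" unfolding \<rho>_def by (simp add: power2_eq_square algebra_simps)
      have "b^2 \<le> b" using b0 b1 by (simp add: power2_eq_square mult_le_cancel_left1)
      hence "norm (p - 1)^2 < d^2" using h1 h2 h3 ex1 ex2 ex3 db b0 by linarith
      hence "norm (p - 1) < d" using d by (smt (verit) power_mono norm_ge_zero)
      thus ?thesis by (simp add: dist_norm norm_minus_commute)
    qed
  qed
  have ob: "Omega_m m \<subseteq> ball (1/2) \<rho>"
  proof
    fix z assume z: "z \<in> Omega_m m"
    have re: "Re z > 0" by (rule omega_re[OF m1 z])
    have sec: "\<bar>Im z\<bar> < \<tau> * Re z" by (rule omega_sector[OF m1 z m\<beta>])
    have "Re z \<le> norm z" by (rule complex_Re_le_cmod)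
    also have "\<dots> < 2 powr (1/m)" by (rule omega_basic(2)[OF z])
    finally have reX: "Re z \<le> X0" using X02 by linarith
    have "(Im z)^2 < (\<tau> * Re z)^2"
      using sec by (metis abs_ge_zero abs_power2 power_strict_mono zero_less_numeral power2_abs)
    hence "norm (z - 1/2)^2 < \<rho>^2"
      using Q[of "Re z"] re reX by (simp add: norm_half_sq power_mult_distrib)
    hence "norm (z - 1/2) < \<rho>" using \<rho>0 by (smt (verit) power_mono norm_ge_zero)
    thus "z \<in> ball (1/2) \<rho>" by (simp add: dist_norm norm_minus_commute)
  qed
  have Es0: "0 \<notin> Es" unfolding Es_def using m1 by auto
  have \<sigma>0: "\<forall>e\<in>Es. \<sigma> e \<ge> 0" unfolding \<sigma>_def by auto
  have vb1: "\<forall>z\<in>Omega_m m. norm (z-1) \<le> 1"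
    using omega_pow[OF m1, of _ 1] mE E1 by fastforce
  have vbe: "\<forall>z\<in>Omega_m m. \<forall>e\<in>Es. norm (z^e-1) \<le> \<sigma> e"
  proof (intro ballI)
    fix z e assume z: "z \<in> Omega_m m" and e: "e \<in> Es"
    show "norm (z^e-1) \<le> \<sigma> e"
    proof (cases "e = m")
      case True thus ?thesis using omega_m[OF m1 z] unfolding \<sigma>_def by simp
    next
      case False
      hence e1: "1 \<le> e" "e \<le> E" using e unfolding Es_def by auto
      have "norm (z^e - 1) < 1" by (rule omega_pow[OF m1 z e1(1)]) (use e1 mE in linarith)
      thus ?thesis using False unfolding \<sigma>_def by simp
    qed
  qed
  have cov: "\<forall>t::complex. dist (1/2) t = \<rho> \<longrightarrow> (\<exists>e\<in>Es. \<sigma> e < norm (t^e - 1))"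
  proof (intro allI impI)
    fix t :: complex assume t: "dist (1/2) t = \<rho>"
    have tn: "norm (t - 1/2) = \<rho>" using t by (simp add: dist_norm norm_minus_commute)
    hence tq: "(Re t - 1/2)^2 + (Im t)^2 = \<rho>^2" by (metis norm_half_sq)
    show "\<exists>e\<in>Es. \<sigma> e < norm (t^e - 1)"
    proof (cases "Re t > X0")
      case True
      have "X0 < norm t" using True complex_Re_le_cmod[of t] by linarith
      hence "X0^m < norm t ^ m" using X01 m1 by (intro power_strict_mono) auto
      hence "4 < norm (t^m)" using X0m by (simp add: norm_power)
      moreover have "norm (t^m) - norm (1::complex) \<le> norm (t^m - 1)" by (rule norm_triangle_ineq2)
      ultimately have "3 < norm (t^m - 1)" by simp
      thus ?thesis unfolding Es_def \<sigma>_def by auto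
    next
      case False
      have t0: "t \<noteq> 0"
      proof
        assume "t = 0"
        hence "\<rho>^2 = 1/4" using tq by (simp add: power2_eq_square)
        moreover have "\<rho>^2 = 1/4 + b + b^2" unfolding \<rho>_def by (simp add: power2_eq_square algebra_simps)
        moreover have "b^2 \<ge> 0" by simp
        ultimately show False using b0 by linarith
      qed
      have argb: "\<beta> \<le> \<bar>Arg t\<bar>"
      proof (cases "Re t > 0")
        case False
        hence "\<not> \<bar>Arg t\<bar> < pi/2" using Arg_Re_pos t0 by blast
        moreover have "\<beta> < pi/2" unfolding \<beta>_def by (rule arctan_ubound)
        ultimately show ?thesis by linarith
      next
        case True
        have "\<tau>^2 * (Re t)^2 \<le> (Im t)^2" using Q[of "Re t"] True False tq by linarith
        hence "(\<tau> * Re t)^2 \<le> \<bar>Im t\<bar>^2" by (simp add: power_mult_distrib)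
        hence "\<tau> * Re t \<le> \<bar>Im t\<bar>" by (rule power2_le_imp_le) simp
        hence "\<tau> \<le> \<bar>Im t / Re t\<bar>" using True by (simp add: abs_divide field_simps)
        hence "arctan \<tau> \<le> arctan \<bar>Im t / Re t\<bar>" by (simp only: arctan_le_iff)
        also have "\<dots> = \<bar>Arg t\<bar>" using arg_conv_arctan[OF True] abs_arctan by simp
        finally show ?thesis unfolding \<beta>_def .
      qed
      obtain e where e: "1 \<le> e" "e \<le> E" "norm (t^e - 1) > 1"
        using cover_arg[OF t0 argb \<beta>0] unfolding E_def by blast
      have "e \<noteq> m" using e mE by linarith
      hence "e \<in> Es" "\<sigma> e = 1" using e unfolding Es_def \<sigma>_def by auto
      thus ?thesis using e(3) by (intro bexI[of _ e]) auto
    qed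
  qed
  show ?thesis
    apply (rule exI[of _ m], rule exI[of _ \<rho>], rule exI[of _ Es], rule exI[of _ \<sigma>])
    using m1 \<rho>0 cb ob Es0 \<sigma>0 vb1 vbe cov by blast
qed

lemma omega_open:
  assumes m: "m \<ge> 1"
  shows "open (Omega_m m)"
proof -
  define A where "A = {z::complex. 0 < Re z}"
  have oA: "open A" unfolding A_def by (rule open_Collect_less) (intro continuous_intros)+
  have cA: "continuous_on A (\<lambda>z. \<bar>Arg z\<bar>)"
  proof -
    have "continuous_on A Arg"
    proof (rule continuous_at_imp_continuous_on, intro ballI)
      fix z assume "z \<in> A"
      hence "0 < Re z" unfolding A_def by simp
      hence "z \<notin> \<real>\<^sub>\<le>\<^sub>0" by (simp add: complex_nonpos_Reals_iff)
      thus "isCont Arg z" by (rule continuous_at_Arg)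
    qed
    thus ?thesis by (rule continuous_on_rabs)
  qed
  define B where "B = (\<lambda>z. \<bar>Arg z\<bar>) -` {..<pi/(2*m)} \<inter> A"
  have o1: "open B" unfolding B_def using continuous_on_open_vimage[OF oA] cA open_lessThan by blast
  define C where "C = {z::complex. norm z < 2 powr (1/m)}"
  have o2: "open C" unfolding C_def by (rule open_Collect_less) (intro continuous_intros)+
  have "Omega_m m = B \<inter> C"
  proof (intro set_eqI iffI)
    fix z assume z: "z \<in> Omega_m m"
    have "Re z > 0" by (rule omega_re[OF m z])
    hence "z \<in> A" unfolding A_def by simp
    moreover note omega_basic[OF z]
    ultimately show "z \<in> B \<inter> C" unfolding B_def C_def by simp
  next
    fix z assume z: "z \<in> B \<inter> C"
    hence "0 < Re z" "\<bar>Arg z\<bar> < pi/(2*m)" "norm z < 2 powr (1/m)" unfolding B_def C_def A_def by simp_all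
    moreover have "z \<noteq> 0" using \<open>0 < Re z\<close> by auto
    ultimately show "z \<in> Omega_m m" unfolding Omega_m_def by simp
  qed
  thus ?thesis using o1 o2 by (simp add: open_Int)
qed

lemma omega_interval:
  assumes m: "m \<ge> 1" and x: "0 < x" "x \<le> 1"
  shows "complex_of_real x \<in> Omega_m m"
proof -
  have "1 < 2 powr (1/m)" using m by (intro gr_one_powr) auto
  moreover have "0 < pi/(2*m)" using m by simp
  ultimately show ?thesis unfolding Omega_m_def using x by auto
qed

lemma mps_restrict:
  assumes "multi_power_series_at_1 V f" "U \<subseteq> V"
  shows "multi_power_series_at_1 U f"
proof -
  obtain N e c where H: "N \<ge> 1" "\<forall>j<N. e j > 0"
    "\<forall>z\<in>V. (\<lambda>i. norm (mps_term N e c z i)) summable_on multi_idx N \<and>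
                 (mps_term N e c z has_sum f z) (multi_idx N)"
    "uniform_limit V (\<lambda>F z. \<Sum>i\<in>F. mps_term N e c z i) f (finite_subsets_at_top (multi_idx N))"
    "uniform_limit V (\<lambda>F z. \<Sum>i\<in>F. norm (mps_term N e c z i))
            (\<lambda>z. infsum (\<lambda>i. norm (mps_term N e c z i)) (multi_idx N))
            (finite_subsets_at_top (multi_idx N))"
    using assms(1) unfolding multi_power_series_at_1_def by blast
  have "uniform_limit U (\<lambda>F z. \<Sum>i\<in>F. mps_term N e c z i) f (finite_subsets_at_top (multi_idx N))"
    by (rule uniform_limit_on_subset[OF H(4) assms(2)])
  moreover have "uniform_limit U (\<lambda>F z. \<Sum>i\<in>F. norm (mps_term N e c z i))
            (\<lambda>z. infsum (\<lambda>i. norm (mps_term N e c z i)) (multi_idx N))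
            (finite_subsets_at_top (multi_idx N))"
    by (rule uniform_limit_on_subset[OF H(5) assms(2)])
  moreover have "\<forall>z\<in>U. (\<lambda>i. norm (mps_term N e c z i)) summable_on multi_idx N \<and>
                 (mps_term N e c z has_sum f z) (multi_idx N)" using H(3) assms(2) by blast
  ultimately show ?thesis unfolding multi_power_series_at_1_def using H(1,2) by blast
qed

theorem mainTheorem3:
  fixes \<alpha> :: "complex \<Rightarrow> complex" and \<nu> :: nat
  assumes "finite_ML_type \<alpha> (ball 0 1 \<union> ball 1 1)"
    and "\<alpha> holomorphic_on ball 0 1"
    and "pole_of_order \<alpha> 1 \<nu>"
  shows "(\<exists>m::nat. m \<ge> 1 \<and>
            (\<exists>f. multi_power_series_at_1 (Omega_m m) f \<and>
                 (\<forall>z\<in>Omega_m m - {1}. f z = (z - 1) ^ \<nu> * \<alpha> z)))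
         \<and> tame (\<lambda>n. (deriv ^^ n) \<alpha> 0 / fact n)"
proof -
  define \<Omega> where "\<Omega> = ball (0::complex) 1 \<union> ball 1 1"
  obtain S where S: "finite S" "S \<subseteq> \<Omega>" "\<alpha> holomorphic_on (\<Omega> - S)"
    using assms(1) unfolding finite_ML_type_def \<Omega>_def by blast
  obtain r1 g0 where r1: "r1 > 0" and g0: "g0 holomorphic_on ball 1 r1"
    and g0eq: "\<And>z. z \<in> ball 1 r1 - {1} \<Longrightarrow> g0 z = (z - 1)^\<nu> * \<alpha> z"
  proof (cases "\<nu> = 0")
    case True
    then obtain r where "r > 0" "\<alpha> holomorphic_on ball 1 r"
      using assms(3) unfolding pole_of_order_def by auto
    thus ?thesis using that[of r \<alpha>] True by simp
  next
    case False
    then obtain r g where r: "r > 0" "g holomorphic_on ball 1 r"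
      "\<forall>z\<in>ball 1 r - {1}. \<alpha> z = g z / (z - 1) ^ \<nu>"
      using assms(3) unfolding pole_of_order_def by auto
    have "g z = (z - 1)^\<nu> * \<alpha> z" if "z \<in> ball 1 r - {1}" for z
      using r(3) that by simp
    thus ?thesis using that[of r g] r by blast
  qed
  obtain \<delta> where \<delta>: "\<delta> > 0" "\<forall>x\<in>S. x \<noteq> 1 \<longrightarrow> \<delta> \<le> dist 1 x"
    using finite_set_avoid[OF S(1), of 1] by blast
  define d where "d = min (min \<delta> r1) 1"
  have d: "0 < d" "d \<le> 1" "d \<le> r1" "d \<le> \<delta>" unfolding d_def using \<delta> r1 by auto
  define W where "W = ball (0::complex) 1 \<union> ball 1 d"
  have oW: "open W" unfolding W_def by (intro open_Un open_ball)
  have oOS: "open (\<Omega> - S)" unfolding \<Omega>_def using S(1) by (intro open_Diff finite_imp_closed) auto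
  have hol\<alpha>: "\<alpha> holomorphic_on (ball 0 1 \<union> (\<Omega> - S))"
    by (rule holomorphic_on_Un[OF assms(2) S(3)]) (use oOS in auto)
  have Wsub: "W - {1} \<subseteq> ball 0 1 \<union> (\<Omega> - S)"
  proof
    fix z assume z: "z \<in> W - {1}"
    show "z \<in> ball 0 1 \<union> (\<Omega> - S)"
    proof (cases "z \<in> ball 0 1")
      case True thus ?thesis by simp
    next
      case False
      hence zb: "z \<in> ball 1 d" "z \<noteq> 1" using z unfolding W_def by auto
      hence "dist 1 z < \<delta>" using d by simp
      hence "z \<notin> S" using \<delta>(2) zb(2) by force
      moreover have "z \<in> \<Omega>" using zb d unfolding \<Omega>_def by auto
      ultimately show ?thesis by simp
    qed
  qed
  have hol\<alpha>W: "\<alpha> holomorphic_on (W - {1})" using holomorphic_on_subset[OF hol\<alpha> Wsub] .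
  define G where "G z = (if z \<in> ball 1 d then g0 z else (z - 1)^\<nu> * \<alpha> z)" for z
  have Geq: "G z = (z - 1)^\<nu> * \<alpha> z" if "z \<in> W - {1}" for z
  proof (cases "z \<in> ball 1 d")
    case True
    hence "z \<in> ball 1 r1 - {1}" using that d by auto
    thus ?thesis using g0eq True unfolding G_def by simp
  next
    case False thus ?thesis unfolding G_def by simp
  qed
  have holG1: "G holomorphic_on (W - {1})"
    by (rule holomorphic_transform[of "\<lambda>z. (z - 1)^\<nu> * \<alpha> z"]) (use hol\<alpha>W Geq in \<open>auto intro!: holomorphic_intros\<close>)
  have holG2: "G holomorphic_on ball 1 d"
    by (rule holomorphic_transform[of g0]) (use g0 d holomorphic_on_subset[OF g0, of "ball 1 d"] in \<open>auto simp: G_def\<close>)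
  have WU: "W = (W - {1}) \<union> ball 1 d" unfolding W_def using d by auto
  have holG: "G holomorphic_on W"
    by (subst WU, rule holomorphic_on_Un[OF holG1 holG2]) (use oW in auto)
  obtain m \<rho> Es \<sigma> where geo: "m \<ge> 1" "\<rho> > 0" "cball (1/2::complex) \<rho> \<subseteq> W" "Omega_m m \<subseteq> ball (1/2) \<rho>"
    "0 \<notin> Es" "\<forall>e\<in>Es. \<sigma> e \<ge> 0" "\<forall>z\<in>Omega_m m. norm (z-1) \<le> 1"
    "\<forall>z\<in>Omega_m m. \<forall>e\<in>Es. norm (z^e-1) \<le> \<sigma> e"
    "\<forall>t::complex. dist (1/2) t = \<rho> \<longrightarrow> (\<exists>e\<in>Es. \<sigma> e < norm (t^e - 1))"
    using geometry[OF d(1,2)] unfolding W_def by blast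
  have mpsG: "multi_power_series_at_1 (Omega_m m) G"
  proof (rule mps_from_circle[OF holG oW geo(3) geo(2) geo(4) geo(5)])
    show "\<And>e. e \<in> Es \<Longrightarrow> 0 \<le> \<sigma> e" using geo(6) by blast
    show "\<And>z. z \<in> Omega_m m \<Longrightarrow> norm (z - 1) \<le> 1" using geo(7) by blast
    show "\<And>z e. z \<in> Omega_m m \<Longrightarrow> e \<in> Es \<Longrightarrow> norm (z^e - 1) \<le> \<sigma> e" using geo(8) by blast
    show "\<And>t::complex. dist (1/2) t = \<rho> \<Longrightarrow> \<exists>e\<in>Es. \<sigma> e < norm (t^e - 1)" using geo(9) by blast
  qed
  have OW: "Omega_m m \<subseteq> W" using geo(3,4) ball_subset_cball by blast
  have Gom: "\<forall>z\<in>Omega_m m - {1}. G z = (z - 1)^\<nu> * \<alpha> z" using Geq OW by blast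
  have part1: "\<exists>m::nat. m \<ge> 1 \<and> (\<exists>f. multi_power_series_at_1 (Omega_m m) f \<and>
                 (\<forall>z\<in>Omega_m m - {1}. f z = (z - 1) ^ \<nu> * \<alpha> z))"
    using geo(1) mpsG Gom by blast
  define b where "b n = (deriv ^^ n) \<alpha> 0 / fact n" for n
  have ser: "(\<lambda>n. b n * z^n) sums \<alpha> z" if "z \<in> ball 0 1" for z
    using holomorphic_power_series[OF assms(2) that] unfolding b_def by simp
  define U where "U = Omega_m m \<inter> W"
  have oU: "open U" unfolding U_def using omega_open[OF geo(1)] oW by auto
  have Usub: "U \<subseteq> ball 0 1 \<union> ball 1 d" unfolding U_def W_def by auto
  have Uint: "of_real ` {0<..1} \<subseteq> U"
  proof
    fix y assume "y \<in> complex_of_real ` {0<..1}"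
    then obtain x where x: "0 < x" "x \<le> 1" "y = of_real x" by auto
    have "y \<in> Omega_m m" using omega_interval[OF geo(1) x(1,2)] x(3) by simp
    moreover have "y \<in> W"
    proof (cases "x < 1")
      case True thus ?thesis using x unfolding W_def by auto
    next
      case False hence "y = 1" using x by simp
      thus ?thesis using d unfolding W_def by simp
    qed
    ultimately show "y \<in> U" unfolding U_def by simp
  qed
  have mpsU: "multi_power_series_at_1 U G" by (rule mps_restrict[OF mpsG]) (auto simp: U_def)
  have hol\<alpha>d: "\<alpha> holomorphic_on (ball 1 d - {1})"
    using holomorphic_on_subset[OF hol\<alpha>W] unfolding W_def by auto
  have tm: "tame b"
    unfolding tame_def
  proof (intro conjI)
    show "\<forall>z\<in>ball 0 1. summable (\<lambda>n. b n * z ^ n)" using ser sums_summable by blast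
    show "\<exists>h r \<nu>'. r > 0 \<and> (\<forall>z\<in>ball 0 1. h z = (\<Sum>n. b n * z ^ n)) \<and>
        h holomorphic_on (ball 1 r - {1}) \<and> pole_of_order h 1 \<nu>' \<and>
        (\<exists>U f. open U \<and> U \<subseteq> ball 0 1 \<union> ball 1 r \<and> of_real ` {0<..1} \<subseteq> U \<and>
               multi_power_series_at_1 U f \<and> (\<forall>z\<in>U - {1}. f z = (z - 1) ^ \<nu>' * h z))"
    proof (intro exI conjI)
      show "0 < d" by (rule d(1))
      show "\<forall>z\<in>ball 0 1. \<alpha> z = (\<Sum>n. b n * z ^ n)" using ser sums_unique by metis
      show "\<alpha> holomorphic_on (ball 1 d - {1})" by (rule hol\<alpha>d)
      show "pole_of_order \<alpha> 1 \<nu>" by (rule assms(3))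
      show "open U" by (rule oU)
      show "U \<subseteq> ball 0 1 \<union> ball 1 d" by (rule Usub)
      show "of_real ` {0<..1} \<subseteq> U" by (rule Uint)
      show "multi_power_series_at_1 U G" by (rule mpsU)
      show "\<forall>z\<in>U - {1}. G z = (z - 1) ^ \<nu> * \<alpha> z" using Gom unfolding U_def by blast
    qed
  qed
  show ?thesis using part1 tm unfolding b_def by blast
qed

end
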